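(* Let $a\in\mathbb{O}$ with $a^2=\pm1$. Then the map $\Phi:{}^*\mathbb{O}(a,1)\to\mathbb{O}_{T_{a,\bar a}\circ\sigma_{\mathbb{O}}}$, $x\mapsto \bar a x$, is an isomorphism of algebras. Consequently, if $a^2=-1$, then $\mathbb{O}_{T_{a,\bar a}\circ\sigma_{\mathbb{O}}}$ is isomorphic to ${}^*\mathbb{O}(i,1)$.
   Context: $\mathbb{O}$ is the real octonion algebra, $\sigma_{\mathbb{O}}(x)=\bar x$ its conjugation, $i\in\mathbb{O}$ a fixed element with $i^2=-1$, and $T_{a,\bar a}(x)=ax\bar a$ (well defined by alternativity). For a linear map $f$ of $\mathbb{O}$, $\mathbb{O}_f$ is $\mathbb{O}$ with product $x* y=f(x)y$. For norm-one $a$, ${}^*\mathbb{O}(a,1)$ is $\mathbb{O}$ with product $x\odot y=(\bar x a)y$. *)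

theory Defs
  imports "HOL-Analysis.Product_Vector"
begin

text \<open>Quaternions and octonions via the Cayley--Dickson construction:
  H = C x C, O = H x H, with (a,b)(c,d) = (ac - conj(d) b, d a + b conj(c))
  and conj(a,b) = (conj a, -b).\<close>

type_synonym quat = "complex \<times> complex"
type_synonym oct = "quat \<times> quat"

definition qmult :: "quat \<Rightarrow> quat \<Rightarrow> quat" where
  "qmult x y = (case x of (a, b) \<Rightarrow> case y of (c, d) \<Rightarrow>
      (a * c - cnj d * b, d * a + b * cnj c))"

definition qconj :: "quat \<Rightarrow> quat" where
  "qconj x = (case x of (a, b) \<Rightarrow> (cnj a, - b))"

definition omult :: "oct \<Rightarrow> oct \<Rightarrow> oct" where
  "omult x y = (case x of (a, b) \<Rightarrow> case y of (c, d) \<Rightarrow>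
      (qmult a c - qmult (qconj d) b, qmult d a + qmult b (qconj c)))"

definition oconj :: "oct \<Rightarrow> oct" where
  "oconj x = (case x of (a, b) \<Rightarrow> (qconj a, - b))"

definition oone :: oct where
  "oone = ((1, 0), 0)"

text \<open>T_{a, conj a}(x) = a x conj(a) (well defined by alternativity).\<close>
definition T_conj :: "oct \<Rightarrow> oct \<Rightarrow> oct" where
  "T_conj a x = omult (omult a x) (oconj a)"

text \<open>Product of O_f: x * y = f(x) y.\<close>
definition twisted_mult :: "(oct \<Rightarrow> oct) \<Rightarrow> oct \<Rightarrow> oct \<Rightarrow> oct" where
  "twisted_mult f x y = omult (f x) y"

text \<open>Product of *O(a,1): x . y = (conj(x) a) y.\<close>
definition star_mult :: "oct \<Rightarrow> oct \<Rightarrow> oct \<Rightarrow> oct" where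
  "star_mult a x y = omult (omult (oconj x) a) y"

definition alg_iso :: "('a::real_vector \<Rightarrow> 'a \<Rightarrow> 'a) \<Rightarrow> ('b::real_vector \<Rightarrow> 'b \<Rightarrow> 'b)
    \<Rightarrow> ('a \<Rightarrow> 'b) \<Rightarrow> bool" where
  "alg_iso m1 m2 \<phi> \<longleftrightarrow> linear \<phi> \<and> bij \<phi> \<and> (\<forall>x y. \<phi> (m1 x y) = m2 (\<phi> x) (\<phi> y))"

end

theory Submission
  imports Defs
begin

definition Oc :: "real \<Rightarrow> real \<Rightarrow> real \<Rightarrow> real \<Rightarrow> real \<Rightarrow> real \<Rightarrow> real \<Rightarrow> real \<Rightarrow> oct" where
  "Oc x0 x1 x2 x3 x4 x5 x6 x7 = ((Complex x0 x1, Complex x2 x3), (Complex x4 x5, Complex x6 x7))"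

lemma oct_cases: obtains x0 x1 x2 x3 x4 x5 x6 x7 where "x = Oc x0 x1 x2 x3 x4 x5 x6 x7"
  unfolding Oc_def by (metis complex.exhaust_sel prod.collapse)

lemma Oc_eq: "Oc x0 x1 x2 x3 x4 x5 x6 x7 = Oc y0 y1 y2 y3 y4 y5 y6 y7 \<longleftrightarrow>
  x0 = y0 \<and> x1 = y1 \<and> x2 = y2 \<and> x3 = y3 \<and> x4 = y4 \<and> x5 = y5 \<and> x6 = y6 \<and> x7 = y7"
  by (simp add: Oc_def)

lemma omult_Oc: "omult (Oc x0 x1 x2 x3 x4 x5 x6 x7) (Oc y0 y1 y2 y3 y4 y5 y6 y7) = Oc
 (x0*y0  - x1*y1  - x2*y2  - x3*y3  - x4*y4  - x5*y5  - x6*y6  - x7*y7) (x0*y1  + x1*y0  + x2*y3  - x3*y2  + x4*y5  - x5*y4  - x6*y7  + x7*y6) (x0*y2  - x1*y3  + x2*y0  + x3*y1  + x4*y6  + x5*y7  - x6*y4  - x7*y5) (x0*y3  + x1*y2  - x2*y1  + x3*y0  + x4*y7  - x5*y6  + x6*y5  - x7*y4) (x0*y4  - x1*y5  - x2*y6  - x3*y7  + x4*y0  + x5*y1  + x6*y2  + x7*y3) (x0*y5  + x1*y4  - x2*y7  + x3*y6  - x4*y1  + x5*y0  - x6*y3  + x7*y2) (x0*y6  + x1*y7  + x2*y4  - x3*y5  - x4*y2  + x5*y3  + x6*y0  - x7*y1) (x0*y7  - x1*y6  + x2*y5  + x3*y4  - x4*y3  - x5*y2  + x6*y1  + x7*y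0)"
  by (simp add: Oc_def omult_def qmult_def qconj_def complex_eq_iff algebra_simps)

lemma oconj_Oc: "oconj (Oc x0 x1 x2 x3 x4 x5 x6 x7) = Oc x0 (-x1) (-x2) (-x3) (-x4) (-x5) (-x6) (-x7)"
  by (simp add: Oc_def oconj_def qconj_def complex_eq_iff prod_eq_iff)
lemma oone_Oc: "oone = Oc 1 0 0 0 0 0 0 0" by (simp add: Oc_def oone_def complex_eq_iff prod_eq_iff)
lemma plus_Oc: "Oc x0 x1 x2 x3 x4 x5 x6 x7 + Oc y0 y1 y2 y3 y4 y5 y6 y7 = Oc (x0+y0) (x1+y1) (x2+y2) (x3+y3) (x4+y4) (x5+y5) (x6+y6) (x7+y7)"
  by (simp add: Oc_def complex_eq_iff prod_eq_iff)
lemma minus_Oc: "Oc x0 x1 x2 x3 x4 x5 x6 x7 - Oc y0 y1 y2 y3 y4 y5 y6 y7 = Oc (x0-y0) (x1-y1) (x2-y2) (x3-y3) (x4-y4) (x5-y5) (x6-y6) (x7-y7)"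
  by (simp add: Oc_def complex_eq_iff prod_eq_iff)
lemma uminus_Oc: "- Oc x0 x1 x2 x3 x4 x5 x6 x7 = Oc (-x0) (-x1) (-x2) (-x3) (-x4) (-x5) (-x6) (-x7)"
  by (simp add: Oc_def complex_eq_iff prod_eq_iff)
lemma scaleR_Oc: "r *\<^sub>R Oc x0 x1 x2 x3 x4 x5 x6 x7 = Oc (r*x0) (r*x1) (r*x2) (r*x3) (r*x4) (r*x5) (r*x6) (r*x7)"
  by (simp add: Oc_def complex_eq_iff scaleR_complex.code)
lemma zero_Oc: "0 = Oc 0 0 0 0 0 0 0 0" by (simp add: Oc_def complex_eq_iff prod_eq_iff)

lemmas Oc_simps = omult_Oc oconj_Oc oone_Oc plus_Oc minus_Oc uminus_Oc scaleR_Oc Oc_eq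



definition oc :: "oct \<Rightarrow> nat \<Rightarrow> real" where
  "oc x k = [Re (fst (fst x)), Im (fst (fst x)), Re (snd (fst x)), Im (snd (fst x)),
             Re (fst (snd x)), Im (fst (snd x)), Re (snd (snd x)), Im (snd (snd x))] ! k"

lemma oc_Oc[simp]: "oc (Oc x0 x1 x2 x3 x4 x5 x6 x7) 0 = x0" "oc (Oc x0 x1 x2 x3 x4 x5 x6 x7) 1 = x1" "oc (Oc x0 x1 x2 x3 x4 x5 x6 x7) (Suc 0) = x1"
  "oc (Oc x0 x1 x2 x3 x4 x5 x6 x7) 2 = x2" "oc (Oc x0 x1 x2 x3 x4 x5 x6 x7) 3 = x3"
  "oc (Oc x0 x1 x2 x3 x4 x5 x6 x7) 4 = x4" "oc (Oc x0 x1 x2 x3 x4 x5 x6 x7) 5 = x5"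
  "oc (Oc x0 x1 x2 x3 x4 x5 x6 x7) 6 = x6" "oc (Oc x0 x1 x2 x3 x4 x5 x6 x7) 7 = x7"
  by (simp_all add: oc_def Oc_def)

lemma bijI2: assumes "\<And>x. h (g x) = x" "\<And>y. g (h y) = y" shows "bij g"
  using assms unfolding bij_def inj_def surj_def by metis

definition auto :: "(oct \<Rightarrow> oct) \<Rightarrow> bool" where
  "auto g \<longleftrightarrow> linear g \<and> bij g \<and> (\<forall>x y. g (omult x y) = omult (g x) (g y)) \<and> (\<forall>x. g (oconj x) = oconj (g x))"

definition sig1 :: "oct \<Rightarrow> oct" where "sig1 x = Oc (oc x 0) (oc x 1) (oc x 4) (oc x 5) (oc x 2) (oc x 3) (- oc x 6) (- oc x 7)"
lemma sig1_Oc[simp]: "sig1 (Oc x0 x1 x2 x3 x4 x5 x6 x7) = Oc x0 x1 x4 x5 x2 x3 (-x6) (-x7)"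
  by (simp add: sig1_def)
lemma sig1_auto: "auto sig1"
  unfolding auto_def
proof (intro conjI allI)
  show "linear sig1"
  proof (rule linearI)
    fix b1 b2 show "sig1 (b1 + b2) = sig1 b1 + sig1 b2"
      by (cases b1 rule: oct_cases; cases b2 rule: oct_cases) (simp add: Oc_simps)
  next
    fix r b show "sig1 (r *\<^sub>R b) = r *\<^sub>R sig1 b"
      by (cases b rule: oct_cases) (simp add: Oc_simps)
  qed
  show "bij sig1"
    apply (rule bijI2[where h="\<lambda>y. Oc (oc y 0) (oc y 1) (oc y 4) (oc y 5) (oc y 2) (oc y 3) (- oc y 6) (- oc y 7)"])
     apply (rename_tac x, case_tac x rule: oct_cases, simp)
    by (rename_tac y, case_tac y rule: oct_cases, simp)
  fix x y show "sig1 (omult x y) = omult (sig1 x) (sig1 y)"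
    by (cases x rule: oct_cases; cases y rule: oct_cases) (simp add: Oc_simps algebra_simps)
next
  fix x show "sig1 (oconj x) = oconj (sig1 x)"
    by (cases x rule: oct_cases) (simp add: Oc_simps)
qed

definition sig3 :: "oct \<Rightarrow> oct" where "sig3 x = Oc (oc x 0) (oc x 1) (oc x 6) (- oc x 7) (oc x 2) (oc x 3) (oc x 4) (- oc x 5)"
lemma sig3_Oc[simp]: "sig3 (Oc x0 x1 x2 x3 x4 x5 x6 x7) = Oc x0 x1 x6 (-x7) x2 x3 x4 (-x5)"
  by (simp add: sig3_def)
lemma sig3_auto: "auto sig3"
  unfolding auto_def
proof (intro conjI allI)
  show "linear sig3"
  proof (rule linearI)
    fix b1 b2 show "sig3 (b1 + b2) = sig3 b1 + sig3 b2"
      by (cases b1 rule: oct_cases; cases b2 rule: oct_cases) (simp add: Oc_simps)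
  next
    fix r b show "sig3 (r *\<^sub>R b) = r *\<^sub>R sig3 b"
      by (cases b rule: oct_cases) (simp add: Oc_simps)
  qed
  show "bij sig3"
    apply (rule bijI2[where h="\<lambda>y. Oc (oc y 0) (oc y 1) (oc y 4) (oc y 5) (oc y 6) (- oc y 7) (oc y 2) (- oc y 3)"])
     apply (rename_tac x, case_tac x rule: oct_cases, simp)
    by (rename_tac y, case_tac y rule: oct_cases, simp)
  fix x y show "sig3 (omult x y) = omult (sig3 x) (sig3 y)"
    by (cases x rule: oct_cases; cases y rule: oct_cases) (simp add: Oc_simps algebra_simps)
next
  fix x show "sig3 (oconj x) = oconj (sig3 x)"
    by (cases x rule: oct_cases) (simp add: Oc_simps)
qed

definition sig5 :: "oct \<Rightarrow> oct" where "sig5 x = Oc (oc x 0) (oc x 5) (oc x 2) (- oc x 7) (oc x 1) (oc x 4) (- oc x 3) (oc x 6)"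
lemma sig5_Oc[simp]: "sig5 (Oc x0 x1 x2 x3 x4 x5 x6 x7) = Oc x0 x5 x2 (-x7) x1 x4 (-x3) x6"
  by (simp add: sig5_def)
lemma sig5_auto: "auto sig5"
  unfolding auto_def
proof (intro conjI allI)
  show "linear sig5"
  proof (rule linearI)
    fix b1 b2 show "sig5 (b1 + b2) = sig5 b1 + sig5 b2"
      by (cases b1 rule: oct_cases; cases b2 rule: oct_cases) (simp add: Oc_simps)
  next
    fix r b show "sig5 (r *\<^sub>R b) = r *\<^sub>R sig5 b"
      by (cases b rule: oct_cases) (simp add: Oc_simps)
  qed
  show "bij sig5"
    apply (rule bijI2[where h="\<lambda>y. Oc (oc y 0) (oc y 4) (oc y 2) (- oc y 6) (oc y 5) (oc y 1) (oc y 7) (- oc y 3)"])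
     apply (rename_tac x, case_tac x rule: oct_cases, simp)
    by (rename_tac y, case_tac y rule: oct_cases, simp)
  fix x y show "sig5 (omult x y) = omult (sig5 x) (sig5 y)"
    by (cases x rule: oct_cases; cases y rule: oct_cases) (simp add: Oc_simps algebra_simps)
next
  fix x show "sig5 (oconj x) = oconj (sig5 x)"
    by (cases x rule: oct_cases) (simp add: Oc_simps)
qed

definition sig7 :: "oct \<Rightarrow> oct" where "sig7 x = Oc (oc x 0) (oc x 4) (oc x 1) (- oc x 5) (oc x 2) (- oc x 6) (oc x 3) (oc x 7)"
lemma sig7_Oc[simp]: "sig7 (Oc x0 x1 x2 x3 x4 x5 x6 x7) = Oc x0 x4 x1 (-x5) x2 (-x6) x3 x7"
  by (simp add: sig7_def)
lemma sig7_auto: "auto sig7"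
  unfolding auto_def
proof (intro conjI allI)
  show "linear sig7"
  proof (rule linearI)
    fix b1 b2 show "sig7 (b1 + b2) = sig7 b1 + sig7 b2"
      by (cases b1 rule: oct_cases; cases b2 rule: oct_cases) (simp add: Oc_simps)
  next
    fix r b show "sig7 (r *\<^sub>R b) = r *\<^sub>R sig7 b"
      by (cases b rule: oct_cases) (simp add: Oc_simps)
  qed
  show "bij sig7"
    apply (rule bijI2[where h="\<lambda>y. Oc (oc y 0) (oc y 2) (oc y 4) (oc y 6) (oc y 1) (- oc y 3) (- oc y 5) (oc y 7)"])
     apply (rename_tac x, case_tac x rule: oct_cases, simp)
    by (rename_tac y, case_tac y rule: oct_cases, simp)
  fix x y show "sig7 (omult x y) = omult (sig7 x) (sig7 y)"
    by (cases x rule: oct_cases; cases y rule: oct_cases) (simp add: Oc_simps algebra_simps)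
next
  fix x show "sig7 (oconj x) = oconj (sig7 x)"
    by (cases x rule: oct_cases) (simp add: Oc_simps)
qed


definition phiq :: "real \<Rightarrow> real \<Rightarrow> real \<Rightarrow> real \<Rightarrow> oct \<Rightarrow> oct" where
 "phiq s0 s1 s2 s3 x = (fst x, qmult (Complex s0 s1, Complex s2 s3) (snd x))"
lemma phiq_Oc[simp]: "phiq s0 s1 s2 s3 (Oc x0 x1 x2 x3 x4 x5 x6 x7) = Oc x0 x1 x2 x3
  (s0*x4 - s1*x5 - s2*x6 - s3*x7) (s0*x5+s1*x4+s2*x7-s3*x6) (s0*x6 - s1*x7 + s2*x4 + s3*x5) (s0*x7 + s1*x6 - s2*x5 + s3*x4)"
  by (simp add: phiq_def Oc_def qmult_def complex_eq_iff algebra_simps)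
lemma phiq_mult_Oc: assumes "s0*s0+s1*s1+s2*s2+s3*s3 = 1"
  shows "phiq s0 s1 s2 s3 (omult (Oc x0 x1 x2 x3 x4 x5 x6 x7) (Oc y0 y1 y2 y3 y4 y5 y6 y7)) = omult (phiq s0 s1 s2 s3 (Oc x0 x1 x2 x3 x4 x5 x6 x7)) (phiq s0 s1 s2 s3 (Oc y0 y1 y2 y3 y4 y5 y6 y7))"
  apply (simp only: Oc_simps phiq_Oc)
  apply (intro conjI)
  using assms by algebra+
lemma phiq_inv_Oc: assumes "s0*s0+s1*s1+s2*s2+s3*s3 = 1"
  shows "phiq s0 (-s1) (-s2) (-s3) (phiq s0 s1 s2 s3 (Oc x0 x1 x2 x3 x4 x5 x6 x7)) = Oc x0 x1 x2 x3 x4 x5 x6 x7"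
  apply (simp only: Oc_simps phiq_Oc)
  apply (intro conjI refl)
  using assms by algebra+

lemma phiq_auto: assumes n: "s0*s0+s1*s1+s2*s2+s3*s3 = 1"
  shows "auto (phiq s0 s1 s2 s3)"
  unfolding auto_def
proof (intro conjI allI)
  show "linear (phiq s0 s1 s2 s3)"
  proof (rule linearI)
    fix b1 b2 show "phiq s0 s1 s2 s3 (b1 + b2) = phiq s0 s1 s2 s3 b1 + phiq s0 s1 s2 s3 b2"
      by (cases b1 rule: oct_cases; cases b2 rule: oct_cases) (simp add: Oc_simps algebra_simps)
  next
    fix r b show "phiq s0 s1 s2 s3 (r *\<^sub>R b) = r *\<^sub>R phiq s0 s1 s2 s3 b"
      by (cases b rule: oct_cases) (simp add: Oc_simps algebra_simps)
  qed
  have n': "s0*s0+(-s1)*(-s1)+(-s2)*(-s2)+(-s3)*(-s3) = 1" using n by simp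
  show "bij (phiq s0 s1 s2 s3)"
  proof (rule bijI2[where h="phiq s0 (-s1) (-s2) (-s3)"])
    fix x show "phiq s0 (-s1) (-s2) (-s3) (phiq s0 s1 s2 s3 x) = x"
      by (cases x rule: oct_cases) (simp only: phiq_inv_Oc[OF n])
  next
    fix y show "phiq s0 s1 s2 s3 (phiq s0 (-s1) (-s2) (-s3) y) = y"
      using phiq_inv_Oc[OF n', of "oc y 0"] by (cases y rule: oct_cases) simp
  qed
  fix x y show "phiq s0 s1 s2 s3 (omult x y) = omult (phiq s0 s1 s2 s3 x) (phiq s0 s1 s2 s3 y)"
    by (cases x rule: oct_cases; cases y rule: oct_cases) (simp only: phiq_mult_Oc[OF n])
next
  fix x show "phiq s0 s1 s2 s3 (oconj x) = oconj (phiq s0 s1 s2 s3 x)"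
    by (cases x rule: oct_cases) (simp add: Oc_simps algebra_simps)
qed

lemma stepA: "\<exists>g r. auto g \<and> 0 \<le> r \<and> g (Oc x0 x1 x2 x3 x4 x5 x6 x7) = Oc x0 x1 x2 x3 r 0 0 0"
proof -
  define N where "N = x4*x4+x5*x5+x6*x6+x7*x7"
  define n where "n = sqrt N"
  have N0: "N \<ge> 0" unfolding N_def by (intro add_nonneg_nonneg) simp_all
  have nn: "n * n = N" unfolding n_def using N0 by simp
  show ?thesis
  proof (cases "n = 0")
    case True
    then have "N = 0" using nn by simp
    moreover have "x4*x4 \<ge> 0" "x5*x5 \<ge> 0" "x6*x6 \<ge> 0" "x7*x7 \<ge> 0" by simp_all
    ultimately have "x4*x4 = 0 \<and> x5*x5 = 0 \<and> x6*x6 = 0 \<and> x7*x7 = 0" unfolding N_def by linarith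
    then have "x4 = 0 \<and> x5 = 0 \<and> x6 = 0 \<and> x7 = 0" by simp
    moreover have "auto id"
      unfolding auto_def by (simp add: linear_id)
    ultimately show ?thesis by (intro exI[of _ id] exI[of _ 0]) simp
  next
    case False
    have npos: "n \<ge> 0" unfolding n_def using N0 by simp
    have nn0: "n*n \<noteq> 0" using False by simp
    have "(x4/n)*(x4/n)+(-x5/n)*(-x5/n)+(-x6/n)*(-x6/n)+(-x7/n)*(-x7/n) = N/(n*n)"
      using False unfolding N_def by (simp add: field_simps)
    then have norm: "(x4/n)*(x4/n)+(-x5/n)*(-x5/n)+(-x6/n)*(-x6/n)+(-x7/n)*(-x7/n) = 1"
      using nn nn0 by simp
    have e4: "(x4/n)*x4 - (-x5/n)*x5 - (-x6/n)*x6 - (-x7/n)*x7 = N/n"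
      using False unfolding N_def by (simp add: field_simps)
    have "N/n = n" using nn False by (metis nonzero_mult_div_cancel_right)
    then have "phiq (x4/n) (-x5/n) (-x6/n) (-x7/n) (Oc x0 x1 x2 x3 x4 x5 x6 x7) = Oc x0 x1 x2 x3 n 0 0 0"
      using e4 False by (simp add: Oc_eq field_simps)
    then show ?thesis using phiq_auto[OF norm] npos by blast
  qed
qed

lemma auto_oone: assumes "auto g" shows "g oone = oone"
proof -
  have om1: "\<And>x. omult x oone = x" "\<And>x. omult oone x = x"
    by (case_tac x rule: oct_cases, simp add: Oc_simps)+
  have sj: "surj g" using assms unfolding auto_def bij_def by blast
  have m: "\<And>x y. g (omult x y) = omult (g x) (g y)" using assms unfolding auto_def by blast
  obtain z where z: "g z = oone" using sj by (metis surjD)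
  have "g oone = omult (g oone) (g z)" using z om1 by simp
  also have "\<dots> = g (omult oone z)" using m by simp
  also have "\<dots> = oone" using z om1 by simp
  finally show ?thesis .
qed

lemma auto_comp: assumes "auto g" "auto h" shows "auto (g \<circ> h)"
proof -
  have "linear g" "bij g" "\<And>x y. g (omult x y) = omult (g x) (g y)" "\<And>x. g (oconj x) = oconj (g x)"
    "linear h" "bij h" "\<And>x y. h (omult x y) = omult (h x) (h y)" "\<And>x. h (oconj x) = oconj (h x)"
    using assms unfolding auto_def by blast+
  then show ?thesis unfolding auto_def by (simp add: linear_compose bij_comp)
qed

lemma auto_inv: assumes "auto g" shows "auto (inv g)"
proof -
  have lin: "linear g" and bj: "bij g" and m: "\<And>x y. g (omult x y) = omult (g x) (g y)"
    and c: "\<And>x. g (oconj x) = oconj (g x)" using assms unfolding auto_def by auto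
  have gi: "\<And>x. g (inv g x) = x" using bj by (simp add: bij_is_surj surj_f_inv_f)
  have ig: "\<And>x. inv g (g x) = x" using bj by (simp add: bij_is_inj)
  have "linear (inv g)"
  proof (rule linearI)
    fix b1 b2 have "g (inv g b1 + inv g b2) = b1 + b2" using lin gi by (simp add: linear_add)
    then show "inv g (b1 + b2) = inv g b1 + inv g b2" using ig by metis
  next
    fix r b have "g (r *\<^sub>R inv g b) = r *\<^sub>R b" using lin gi by (simp add: linear_scale)
    then show "inv g (r *\<^sub>R b) = r *\<^sub>R inv g b" using ig by metis
  qed
  moreover have "bij (inv g)" using bj by (simp add: bij_imp_bij_inv)
  moreover have "\<And>x y. inv g (omult x y) = omult (inv g x) (inv g y)"
    by (metis gi ig m)
  moreover have "\<And>x. inv g (oconj x) = oconj (inv g x)"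
    by (metis gi ig c)
  ultimately show ?thesis unfolding auto_def by blast
qed

lemma auto_neg: assumes "auto g" shows "g (- x) = - g x"
proof -
  have "linear g" using assms unfolding auto_def by blast
  then show ?thesis by (simp add: linear_neg)
qed

lemma chain: assumes sq: "omult a a = - oone" shows "\<exists>G. auto G \<and> G a = Oc 0 1 0 0 0 0 0 0"
proof -
  obtain x0 x1 x2 x3 x4 x5 x6 x7 where a: "a = Oc x0 x1 x2 x3 x4 x5 x6 x7" by (rule oct_cases)
  obtain g1 t where g1: "auto g1" "g1 a = Oc x0 x1 x2 x3 t 0 0 0" using stepA a by blast
  have s1: "sig1 (g1 a) = Oc x0 x1 t 0 x2 x3 0 0" using g1 by simp
  obtain g2 u where g2: "auto g2" "g2 (Oc x0 x1 t 0 x2 x3 0 0) = Oc x0 x1 t 0 u 0 0 0" using stepA by blast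
  have s3: "sig3 (Oc x0 x1 t 0 u 0 0 0) = Oc x0 x1 0 0 t 0 u 0" by simp
  obtain g3 v where g3: "auto g3" "g3 (Oc x0 x1 0 0 t 0 u 0) = Oc x0 x1 0 0 v 0 0 0" using stepA by blast
  have s5: "sig5 (Oc x0 x1 0 0 v 0 0 0) = Oc x0 0 0 0 x1 v 0 0" by simp
  obtain g4 w where g4: "auto g4" "0 \<le> w" "g4 (Oc x0 0 0 0 x1 v 0 0) = Oc x0 0 0 0 w 0 0 0" using stepA by blast
  have s7: "sig7 (Oc x0 0 0 0 w 0 0 0) = Oc x0 w 0 0 0 0 0 0" by simp
  define G where "G = sig7 \<circ> g4 \<circ> sig5 \<circ> g3 \<circ> sig3 \<circ> g2 \<circ> sig1 \<circ> g1"
  have aG: "auto G" unfolding G_def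
    by (intro auto_comp sig1_auto sig3_auto sig5_auto sig7_auto g1 g2 g3 g4)
  have Ga: "G a = Oc x0 w 0 0 0 0 0 0"
    unfolding G_def using s1 g2 s3 g3 s5 g4 s7 by simp
  have "G (omult a a) = omult (G a) (G a)" using aG unfolding auto_def by blast
  also have "G (omult a a) = - oone" using sq auto_neg[OF aG] auto_oone[OF aG] by simp
  finally have "Oc (-1) 0 0 0 0 0 0 0 = omult (Oc x0 w 0 0 0 0 0 0) (Oc x0 w 0 0 0 0 0 0)"
    using Ga by (simp add: Oc_simps)
  then have e: "x0*x0 - w*w = -1" "x0*w + w*x0 = 0" by (simp_all add: Oc_simps)
  have "x0 = 0"
  proof (rule ccontr)
    assume "x0 \<noteq> 0" then have "w = 0" using e(2) by simp
    then have "x0*x0 = -1" using e(1) by simp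
    moreover have "x0*x0 \<ge> 0" by simp
    ultimately show False by linarith
  qed
  then have "w*w = 1" using e(1) by simp
  then have "w = 1" using \<open>0 \<le> w\<close> by (metis abs_of_nonneg real_sqrt_abs real_sqrt_one power2_eq_square)
  then show ?thesis using aG Ga \<open>x0 = 0\<close> by blast
qed


lemma om_oone: "omult x oone = x" "omult oone x = x"
  by (cases x rule: oct_cases, simp add: Oc_simps)+
lemma om_neg: "omult (-x) y = - omult x y" "omult x (-y) = - omult x y"
  by (cases x rule: oct_cases; cases y rule: oct_cases; simp add: Oc_simps algebra_simps)+
lemma oconj_neg: "oconj (-x) = - oconj x"
  by (cases x rule: oct_cases) (simp add: Oc_simps)
lemma conj_anti: "oconj (omult x y) = omult (oconj y) (oconj x)"
  by (cases x rule: oct_cases; cases y rule: oct_cases) (simp add: Oc_simps algebra_simps)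
lemma left_alt: "omult a (omult a y) = omult (omult a a) y"
  by (cases a rule: oct_cases; cases y rule: oct_cases) (simp add: Oc_simps algebra_simps)
lemma moufang_Oc: "omult (omult (omult (Oc a0 a1 a2 a3 a4 a5 a6 a7) (Oc z0 z1 z2 z3 z4 z5 z6 z7)) (Oc a0 a1 a2 a3 a4 a5 a6 a7)) (Oc y0 y1 y2 y3 y4 y5 y6 y7) = omult (Oc a0 a1 a2 a3 a4 a5 a6 a7) (omult (Oc z0 z1 z2 z3 z4 z5 z6 z7) (omult (Oc a0 a1 a2 a3 a4 a5 a6 a7) (Oc y0 y1 y2 y3 y4 y5 y6 y7)))"
  apply (simp only: Oc_simps)
  apply (intro conjI)
  by algebra+
lemma moufang: "omult (omult (omult a z) a) y = omult a (omult z (omult a y))"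
  by (cases a rule: oct_cases; cases z rule: oct_cases; cases y rule: oct_cases) (simp only: moufang_Oc)
lemma om_add: "omult c (x + y) = omult c x + omult c y"
  by (cases c rule: oct_cases; cases x rule: oct_cases; cases y rule: oct_cases) (simp add: Oc_simps algebra_simps)
lemma om_scale: "omult c (r *\<^sub>R x) = r *\<^sub>R omult c x"
  by (cases c rule: oct_cases; cases x rule: oct_cases) (simp add: Oc_simps algebra_simps)
lemma conj_left: "omult (oconj (Oc a0 a1 a2 a3 a4 a5 a6 a7)) (omult (Oc a0 a1 a2 a3 a4 a5 a6 a7) x)
   = (a0*a0+a1*a1+a2*a2+a3*a3+a4*a4+a5*a5+a6*a6+a7*a7) *\<^sub>R x"
  by (cases x rule: oct_cases) (simp add: Oc_simps algebra_simps)
lemma conj_right: "omult (Oc a0 a1 a2 a3 a4 a5 a6 a7) (omult (oconj (Oc a0 a1 a2 a3 a4 a5 a6 a7)) x)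
   = (a0*a0+a1*a1+a2*a2+a3*a3+a4*a4+a5*a5+a6*a6+a7*a7) *\<^sub>R x"
  by (cases x rule: oct_cases) (simp add: Oc_simps algebra_simps)

lemma sq_analysis:
  assumes ha: "omult a a = oone \<or> omult a a = - oone"
  shows "(omult a a = oone \<longrightarrow> a = oone \<or> a = - oone)
       \<and> (omult a a = - oone \<longrightarrow> oconj a = - a)
       \<and> omult (oconj a) (omult a x) = x \<and> omult a (omult (oconj a) x) = x"
proof -
  obtain a0 a1 a2 a3 a4 a5 a6 a7 where a: "a = Oc a0 a1 a2 a3 a4 a5 a6 a7" by (rule oct_cases)
  define S where "S = a1*a1+a2*a2+a3*a3+a4*a4+a5*a5+a6*a6+a7*a7"
  have S0: "S \<ge> 0" unfolding S_def by (intro add_nonneg_nonneg) simp_all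
  have sq: "omult a a = Oc (a0*a0 - S) (2*a0*a1) (2*a0*a2) (2*a0*a3) (2*a0*a4) (2*a0*a5) (2*a0*a6) (2*a0*a7)"
    unfolding a S_def by (simp add: Oc_simps algebra_simps)
  have one: "omult a a = oone \<Longrightarrow> (a = oone \<or> a = - oone) \<and> a0*a0 + S = 1"
  proof -
    assume h: "omult a a = oone"
    then have e: "a0*a0 - S = 1" "a0*a1 = 0" "a0*a2 = 0" "a0*a3 = 0" "a0*a4 = 0" "a0*a5 = 0" "a0*a6 = 0" "a0*a7 = 0"
      unfolding sq by (simp_all add: Oc_simps)
    have "a0 \<noteq> 0" using e(1) S0 by auto
    then have z: "a1 = 0" "a2 = 0" "a3 = 0" "a4 = 0" "a5 = 0" "a6 = 0" "a7 = 0" using e by simp_all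
    then have "a0*a0 = 1" using e(1) unfolding S_def by simp
    then have "a0 = 1 \<or> a0 = -1" using square_eq_1_iff by blast
    then show ?thesis unfolding a S_def using z by (auto simp: Oc_simps)
  qed
  have two: "omult a a = - oone \<Longrightarrow> a0 = 0 \<and> S = 1"
  proof -
    assume h: "omult a a = - oone"
    then have e: "a0*a0 - S = -1" "a0*a1 = 0" "a0*a2 = 0" "a0*a3 = 0" "a0*a4 = 0" "a0*a5 = 0" "a0*a6 = 0" "a0*a7 = 0"
      unfolding sq by (simp_all add: Oc_simps)
    have "a0 = 0"
    proof (rule ccontr)
      assume "a0 \<noteq> 0"
      then have z: "a1 = 0" "a2 = 0" "a3 = 0" "a4 = 0" "a5 = 0" "a6 = 0" "a7 = 0" using e by simp_all
      then have "a0*a0 = -1" using e(1) unfolding S_def by simp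
      moreover have "a0*a0 \<ge> 0" by simp
      ultimately show False by linarith
    qed
    then show ?thesis using e(1) by simp
  qed
  have N: "a0*a0 + S = 1"
  proof (cases "omult a a = oone")
    case True then show ?thesis using one by blast
  next
    case False then have "omult a a = - oone" using ha by blast
    then have "a0 = 0 \<and> S = 1" by (rule two)
    then show ?thesis by simp
  qed
  have c2: "oconj a = - a" if h: "omult a a = - oone"
  proof -
    have "a0 = 0" using two[OF h] by blast
    then show ?thesis unfolding a by (simp add: Oc_simps)
  qed
  have N': "a0*a0+a1*a1+a2*a2+a3*a3+a4*a4+a5*a5+a6*a6+a7*a7 = 1" using N unfolding S_def by linarith
  have l: "omult (oconj a) (omult a x) = x" unfolding a by (simp only: conj_left N' scaleR_one)
  have r: "omult a (omult (oconj a) x) = x" unfolding a by (simp only: conj_right N' scaleR_one)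
  show ?thesis using one c2 l r by (intro conjI impI) blast+
qed

lemma key_identity:
  assumes ha: "omult a a = oone \<or> omult a a = - oone"
  shows "omult (oconj a) (star_mult a x y) = twisted_mult (T_conj a \<circ> oconj) (omult (oconj a) x) (omult (oconj a) y)"
proof (cases "omult a a = oone")
  case True
  then have "a = oone \<or> a = - oone" using sq_analysis[OF ha] by blast
  moreover have "oconj oone = oone" by (simp add: Oc_simps)
  ultimately show ?thesis
    unfolding star_mult_def twisted_mult_def T_conj_def comp_def
    by (auto simp: om_neg om_oone oconj_neg conj_anti)
next
  case False
  then have sq: "omult a a = - oone" using ha by blast
  then have ca: "oconj a = - a" using sq_analysis[OF ha] by blast
  define b where "b = omult (oconj x) a"
  have w: "oconj (omult (oconj a) x) = b"
    unfolding b_def by (simp add: ca om_neg oconj_neg conj_anti)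
  have "twisted_mult (T_conj a \<circ> oconj) (omult (oconj a) x) (omult (oconj a) y)
      = omult (omult (omult a b) (- a)) (- omult a y)"
    unfolding twisted_mult_def T_conj_def comp_def w by (simp add: ca om_neg)
  also have "\<dots> = omult (omult (omult a b) a) (omult a y)" by (simp add: om_neg)
  also have "\<dots> = omult a (omult b (omult a (omult a y)))" by (rule moufang)
  also have "\<dots> = - omult a (omult b y)" by (simp add: left_alt sq om_neg om_oone)
  also have "\<dots> = omult (oconj a) (star_mult a x y)"
    unfolding star_mult_def b_def ca by (simp add: om_neg)
  finally show ?thesis by simp
qed

lemma auto_star: assumes "auto g" shows "g (star_mult a u v) = star_mult (g a) (g u) (g v)"
proof -
  have m: "\<And>x y. g (omult x y) = omult (g x) (g y)" and c: "\<And>x. g (oconj x) = oconj (g x)"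
    using assms unfolding auto_def by blast+
  show ?thesis unfolding star_mult_def by (simp add: m c)
qed

lemma linear_omult: "linear (\<lambda>x. omult c x)"
  by (rule linearI) (simp_all add: om_add om_scale)

theorem lemma13:
  fixes a :: oct
  assumes ha: "omult a a = oone \<or> omult a a = - oone"
  shows "alg_iso (star_mult a) (twisted_mult (T_conj a \<circ> oconj)) (\<lambda>x. omult (oconj a) x)
     \<and> (omult a a = - oone \<longrightarrow>
          (\<forall>i::oct. omult i i = - oone \<longrightarrow>
             (\<exists>\<Psi>. alg_iso (twisted_mult (T_conj a \<circ> oconj)) (star_mult i) \<Psi>)))"
proof -
  have l: "\<And>x. omult (oconj a) (omult a x) = x" and r: "\<And>x. omult a (omult (oconj a) x) = x"
    using sq_analysis[OF ha] by blast+
  have bA: "bij (\<lambda>x. omult a x)" by (rule bijI2[where h="\<lambda>x. omult (oconj a) x"]) (simp_all add: l r)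
  have iso1: "alg_iso (star_mult a) (twisted_mult (T_conj a \<circ> oconj)) (\<lambda>x. omult (oconj a) x)"
    unfolding alg_iso_def
  proof (intro conjI allI)
    show "linear (\<lambda>x. omult (oconj a) x)" by (rule linear_omult)
    show "bij (\<lambda>x. omult (oconj a) x)" by (rule bijI2[where h="\<lambda>x. omult a x"]) (simp_all add: l r)
    fix x y show "omult (oconj a) (star_mult a x y) = twisted_mult (T_conj a \<circ> oconj) (omult (oconj a) x) (omult (oconj a) y)"
      by (rule key_identity[OF ha])
  qed
  have part2: "\<exists>\<Psi>. alg_iso (twisted_mult (T_conj a \<circ> oconj)) (star_mult i) \<Psi>"
    if sq: "omult a a = - oone" and si: "omult i i = - oone" for i
  proof -
    obtain Ga where Ga: "auto Ga" "Ga a = Oc 0 1 0 0 0 0 0 0" using chain[OF sq] by blast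
    obtain Gi where Gi: "auto Gi" "Gi i = Oc 0 1 0 0 0 0 0 0" using chain[OF si] by blast
    define g where "g = inv Gi \<circ> Ga"
    have ag: "auto g" unfolding g_def by (intro auto_comp auto_inv Ga Gi)
    have "inj Gi" using Gi(1) unfolding auto_def bij_def by blast
    then have ga: "g a = i" unfolding g_def using Ga(2) Gi(2) by (metis comp_apply inv_f_f)
    have lg: "linear g" and bg: "bij g" using ag unfolding auto_def by blast+
    define \<Psi> where "\<Psi> = g \<circ> (\<lambda>x. omult a x)"
    have "alg_iso (twisted_mult (T_conj a \<circ> oconj)) (star_mult i) \<Psi>"
      unfolding alg_iso_def
    proof (intro conjI allI)
      show "linear \<Psi>" unfolding \<Psi>_def by (intro linear_compose[OF linear_omult lg])
      show "bij \<Psi>" unfolding \<Psi>_def by (intro bij_comp[OF bA bg])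
      fix x y
      have "omult (oconj a) (star_mult a (omult a x) (omult a y)) = twisted_mult (T_conj a \<circ> oconj) x y"
        using key_identity[OF ha, of "omult a x" "omult a y"] by (simp add: l)
      then have "omult a (twisted_mult (T_conj a \<circ> oconj) x y) = star_mult a (omult a x) (omult a y)"
        using r by metis
      then show "\<Psi> (twisted_mult (T_conj a \<circ> oconj) x y) = star_mult i (\<Psi> x) (\<Psi> y)"
        unfolding \<Psi>_def using auto_star[OF ag] ga by simp
    qed
    then show ?thesis by blast
  qed
  show ?thesis using iso1 part2 by blast
qed

end
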